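(* Let $G$ be a finite subgroup of $O(2)\times O(2)\times O(2)$. If the Fitting subgroup $F(G)$ is cyclic, then $G$ belongs to $\mathcal{G}_{1}^{2}$, i.e. $G$ has a cyclic normal subgroup $H$ such that $G/H$ is a $2$-group.
   Context: The Fitting subgroup $F(G)$ is the unique largest nilpotent normal subgroup of $G$. For primes $p,q$, $\mathcal{G}_p^q$ is the class of finite groups $G$ with a normal series $P\trianglelefteq H\trianglelefteq G$ where $P$ is a $p$-group, $H/P$ is cyclic and $G/H$ is a $q$-group; $p=1$ means $P$ is trivial. *)

theory Defs
  imports "HOL-Analysis.Analysis" "HOL-Algebra.Algebra"
begin

definition O2 :: "(real^2^2) monoid" where
  "O2 = \<lparr>carrier = {A. orthogonal_matrix A}, mult = (\<lambda>A B. A ** B), one = mat 1\<rparr>"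

definition O2cube :: "((real^2^2) \<times> (real^2^2) \<times> (real^2^2)) monoid" where
  "O2cube = O2 \<times>\<times> O2 \<times>\<times> O2"

definition commutator_subgroup :: "('a, 'b) monoid_scheme \<Rightarrow> 'a set \<Rightarrow> 'a set \<Rightarrow> 'a set" where
  "commutator_subgroup G A B =
     generate G {x \<otimes>\<^bsub>G\<^esub> y \<otimes>\<^bsub>G\<^esub> inv\<^bsub>G\<^esub> x \<otimes>\<^bsub>G\<^esub> inv\<^bsub>G\<^esub> y | x y. x \<in> A \<and> y \<in> B}"

fun lower_central :: "('a, 'b) monoid_scheme \<Rightarrow> nat \<Rightarrow> 'a set" where
  "lower_central G 0 = carrier G"
| "lower_central G (Suc n) = commutator_subgroup G (lower_central G n) (carrier G)"

definition nilpotent_group :: "('a, 'b) monoid_scheme \<Rightarrow> bool" where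
  "nilpotent_group G \<longleftrightarrow> group G \<and> (\<exists>n. lower_central G n = {\<one>\<^bsub>G\<^esub>})"

text \<open>Fitting subgroup: the subgroup generated by all nilpotent normal subgroups
  (for finite groups this is the unique largest nilpotent normal subgroup).\<close>
definition fitting_subgroup :: "('a, 'b) monoid_scheme \<Rightarrow> 'a set" where
  "fitting_subgroup G =
     generate G (\<Union>{N. N \<lhd> G \<and> nilpotent_group (G\<lparr>carrier := N\<rparr>)})"

end

theory Submission
  imports Defs
begin

lemma rot_comm:
  fixes A B :: "real^2^2"
  assumes "orthogonal_matrix A" "det A = 1" "orthogonal_matrix B" "det B = 1"
  shows "A ** B = B ** A"
proof -
  have canon: "M$2$2 = M$1$1 \<and> M$2$1 = - M$1$2" if "orthogonal_matrix M" "det M = 1" for M :: "real^2^2"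
  proof -
    have e1: "transpose M ** M = mat 1" "M ** transpose M = mat 1" using that(1) by (auto simp: orthogonal_matrix_def)
    have a0: "(M ** transpose M)$1$1 = 1" "(M ** transpose M)$2$2 = 1" using e1(2) by (simp_all add: mat_def)
    have a: "M$1$1^2 + M$1$2^2 = 1" using a0(1)
      by (simp add: matrix_matrix_mult_def sum_2 transpose_def mat_def power2_eq_square)
    have b: "M$2$1^2 + M$2$2^2 = 1" using a0(2)
      by (simp add: matrix_matrix_mult_def sum_2 transpose_def mat_def power2_eq_square)
    have d: "M$1$1 * M$2$2 - M$1$2 * M$2$1 = 1" using that(2) by (simp add: det_2)
    have "(M$1$1 - M$2$2)^2 + (M$1$2 + M$2$1)^2 = 0"
      using a b d by (simp add: power2_eq_square algebra_simps)
    then show ?thesis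
      by (smt (verit) sum_squares_eq_zero_iff power2_eq_square)
  qed
  from canon[OF assms(1,2)] canon[OF assms(3,4)] show ?thesis
    by (simp add: vec_eq_iff forall_2 matrix_matrix_mult_def sum_2 algebra_simps)
qed

lemma group_O2: "group O2"
  apply (rule groupI)
  apply (auto simp: O2_def orthogonal_matrix_mul orthogonal_matrix_id matrix_mul_assoc)
  apply (rule_tac x="transpose x" in exI)
  apply (auto simp: orthogonal_matrix_def)
  done

lemma group_O2cube: "group O2cube"
  unfolding O2cube_def by (intro DirProd_group group_O2)


definition D2 :: "real monoid" where
  "D2 = \<lparr>carrier = {-1, 1}, mult = (*), one = 1\<rparr>"

lemma group_D2: "group D2"
proof (rule groupI)
  fix x assume "x \<in> carrier D2"
  then show "\<exists>y\<in>carrier D2. y \<otimes>\<^bsub>D2\<^esub> x = \<one>\<^bsub>D2\<^esub>"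
    by (rule_tac x=x in bexI) (auto simp: D2_def)
qed (auto simp: D2_def)

definition Q8 :: "(real \<times> real \<times> real) monoid" where
  "Q8 = D2 \<times>\<times> D2 \<times>\<times> D2"

lemma group_Q8: "group Q8"
  unfolding Q8_def by (intro DirProd_group group_D2)

lemma card_Q8: "card (carrier Q8) = 8"
  by (simp add: Q8_def D2_def card_cartesian_product)

definition dets :: "(real^2^2) \<times> (real^2^2) \<times> (real^2^2) \<Rightarrow> real \<times> real \<times> real" where
  "dets x = (det (fst x), det (fst (snd x)), det (snd (snd x)))"

lemma carrier_O2cube: "carrier O2cube = {A. orthogonal_matrix A} \<times> {A. orthogonal_matrix A} \<times> {A. orthogonal_matrix A}"
  by (simp add: O2cube_def O2_def)

lemma mult_O2cube: "x \<otimes>\<^bsub>O2cube\<^esub> y = (fst x ** fst y, fst (snd x) ** fst (snd y), snd (snd x) ** snd (snd y))"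
  by (simp add: O2cube_def O2_def DirProd_def split_beta)

lemma one_O2cube: "\<one>\<^bsub>O2cube\<^esub> = (mat 1, mat 1, mat 1)"
  by (simp add: O2cube_def O2_def DirProd_def split_beta)

lemma dets_hom: "dets \<in> hom O2cube Q8"
proof (rule homI)
  fix x assume "x \<in> carrier O2cube"
  then have "orthogonal_matrix (fst x)" "orthogonal_matrix (fst (snd x))" "orthogonal_matrix (snd (snd x))"
    by (auto simp: carrier_O2cube)
  then show "dets x \<in> carrier Q8"
    using det_orthogonal_matrix[of "fst x"] det_orthogonal_matrix[of "fst (snd x)"] det_orthogonal_matrix[of "snd (snd x)"]
    by (simp add: Q8_def D2_def dets_def) blast
next
  fix x y assume "x \<in> carrier O2cube" "y \<in> carrier O2cube"
  then show "dets (x \<otimes>\<^bsub>O2cube\<^esub> y) = dets x \<otimes>\<^bsub>Q8\<^esub> dets y"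
    by (simp add: mult_O2cube dets_def det_mul Q8_def D2_def DirProd_def)
qed


lemma dvd8_pow2: "(c::nat) dvd 8 \<Longrightarrow> \<exists>k. c = 2 ^ k"
proof -
  assume h: "c dvd 8"
  then have "c \<le> 8" by (auto intro: dvd_imp_le)
  have "c \<noteq> 0" using h by (metis dvd_0_left_iff zero_neq_numeral)
  then show ?thesis using h
    using divides_primepow_nat[of 2 c 3] by auto
qed

theorem proposition2p8:
  fixes S :: "((real^2^2) \<times> (real^2^2) \<times> (real^2^2)) set"
  assumes "subgroup S O2cube"
    and "finite S"
    and "cyclic_group ((O2cube\<lparr>carrier := S\<rparr>)\<lparr>carrier := fitting_subgroup (O2cube\<lparr>carrier := S\<rparr>)\<rparr>)"
  shows "\<exists>H. H \<lhd> (O2cube\<lparr>carrier := S\<rparr>)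
           \<and> cyclic_group ((O2cube\<lparr>carrier := S\<rparr>)\<lparr>carrier := H\<rparr>)
           \<and> (\<exists>k::nat. order ((O2cube\<lparr>carrier := S\<rparr>) Mod H) = 2 ^ k)"
proof -
  define G where "G = O2cube\<lparr>carrier := S\<rparr>"
  have grpG: "group G" unfolding G_def by (rule group.subgroup_imp_group[OF group_O2cube assms(1)])
  have cG: "carrier G = S" by (simp add: G_def)
  have SO: "S \<subseteq> carrier O2cube" using subgroup.subset[OF assms(1)] .
  have hG8: "group_hom G Q8 dets"
  proof -
    have "dets \<in> hom G Q8" using dets_hom SO by (auto simp: hom_def G_def)
    then show ?thesis using grpG group_Q8 by (simp add: group_hom_def group_hom_axioms_def)
  qed
  have subQ: "subgroup (dets ` S) Q8"
    using group_hom.img_is_subgroup[OF hG8] by (simp add: cG)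
  define Q where "Q = Q8\<lparr>carrier := dets ` S\<rparr>"
  have grpQ: "group Q" unfolding Q_def by (rule group.subgroup_imp_group[OF group_Q8 subQ])
  have hGQ: "group_hom G Q dets"
  proof -
    have "dets \<in> hom G Q" using hG8 unfolding group_hom_def group_hom_axioms_def
      by (auto simp: hom_def Q_def cG)
    then show ?thesis using grpG grpQ by (simp add: group_hom_def group_hom_axioms_def)
  qed
  define R where "R = kernel G Q dets"
  have nR: "R \<lhd> G" unfolding R_def by (rule group_hom.normal_kernel[OF hGQ])
  have subR: "subgroup R G" using normal_imp_subgroup[OF nR] .
  have "(\<lambda>z. the_elem (dets`z)) \<in> iso (G Mod R) Q"
    unfolding R_def by (rule group_hom.FactGroup_iso_set[OF hGQ]) (simp add: Q_def cG)
  then have cardGR: "card (rcosets\<^bsub>G\<^esub> R) = card (dets ` S)"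
    using iso_same_card[OF is_isoI] by (fastforce simp: FactGroup_def Q_def)
  have "card (rcosets\<^bsub>Q8\<^esub> (dets ` S)) * card (dets ` S) = 8"
    using group.lagrange[OF group_Q8 subQ] card_Q8 by (simp add: order_def)
  then have m8: "card (rcosets\<^bsub>G\<^esub> R) dvd 8" using cardGR by (metis dvd_triv_right)
  have Rchar: "x \<in> S \<and> dets x = (1,1,1)" if "x \<in> R" for x
    using that by (simp add: R_def kernel_def Q_def cG Q8_def D2_def DirProd_def)
  have Rcomm: "x \<otimes>\<^bsub>G\<^esub> y = y \<otimes>\<^bsub>G\<^esub> x" if "x \<in> R" "y \<in> R" for x y
  proof -
    have "x \<in> carrier O2cube" "y \<in> carrier O2cube" using Rchar[OF that(1)] Rchar[OF that(2)] SO by auto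
    then show ?thesis using Rchar[OF that(1)] Rchar[OF that(2)]
      by (auto simp: G_def mult_O2cube carrier_O2cube dets_def mem_Times_iff intro: rot_comm)
  qed
  define K where "K = G\<lparr>carrier := R\<rparr>"
  have grpK: "group K" unfolding K_def by (rule group.subgroup_imp_group[OF grpG subR])
  have cgK: "comm_group K"
    by (rule group.group_comm_groupI[OF grpK]) (simp add: K_def Rcomm)
  have comm1: "{x \<otimes>\<^bsub>K\<^esub> y \<otimes>\<^bsub>K\<^esub> inv\<^bsub>K\<^esub> x \<otimes>\<^bsub>K\<^esub> inv\<^bsub>K\<^esub> y | x y. x \<in> carrier K \<and> y \<in> carrier K} = {\<one>\<^bsub>K\<^esub>}"
  proof -
    interpret K: comm_group K by (rule cgK)
    have "x \<otimes>\<^bsub>K\<^esub> y \<otimes>\<^bsub>K\<^esub> inv\<^bsub>K\<^esub> x \<otimes>\<^bsub>K\<^esub> inv\<^bsub>K\<^esub> y = \<one>\<^bsub>K\<^esub>"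
      if "x \<in> carrier K" "y \<in> carrier K" for x y
    proof -
      have "x \<otimes>\<^bsub>K\<^esub> y \<otimes>\<^bsub>K\<^esub> inv\<^bsub>K\<^esub> x \<otimes>\<^bsub>K\<^esub> inv\<^bsub>K\<^esub> y
          = x \<otimes>\<^bsub>K\<^esub> (y \<otimes>\<^bsub>K\<^esub> (inv\<^bsub>K\<^esub> x \<otimes>\<^bsub>K\<^esub> inv\<^bsub>K\<^esub> y))"
        using that by (simp add: K.m_assoc)
      also have "\<dots> = x \<otimes>\<^bsub>K\<^esub> (inv\<^bsub>K\<^esub> x \<otimes>\<^bsub>K\<^esub> (y \<otimes>\<^bsub>K\<^esub> inv\<^bsub>K\<^esub> y))"
        using that K.m_lcomm[of y "inv\<^bsub>K\<^esub> x" "inv\<^bsub>K\<^esub> y"] by simp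
      also have "\<dots> = \<one>\<^bsub>K\<^esub>" using that by simp
      finally show ?thesis .
    qed
    then have A: "\<And>x y. x \<in> carrier K \<Longrightarrow> y \<in> carrier K \<Longrightarrow> x \<otimes>\<^bsub>K\<^esub> y \<otimes>\<^bsub>K\<^esub> inv\<^bsub>K\<^esub> x \<otimes>\<^bsub>K\<^esub> inv\<^bsub>K\<^esub> y = \<one>\<^bsub>K\<^esub>" .
    show ?thesis
    proof
      show "{x \<otimes>\<^bsub>K\<^esub> y \<otimes>\<^bsub>K\<^esub> inv\<^bsub>K\<^esub> x \<otimes>\<^bsub>K\<^esub> inv\<^bsub>K\<^esub> y | x y. x \<in> carrier K \<and> y \<in> carrier K} \<subseteq> {\<one>\<^bsub>K\<^esub>}"
        using A by blast
      have "\<one>\<^bsub>K\<^esub> = \<one>\<^bsub>K\<^esub> \<otimes>\<^bsub>K\<^esub> \<one>\<^bsub>K\<^esub> \<otimes>\<^bsub>K\<^esub> inv\<^bsub>K\<^esub> \<one>\<^bsub>K\<^esub> \<otimes>\<^bsub>K\<^esub> inv\<^bsub>K\<^esub> \<one>\<^bsub>K\<^esub>"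
        using A[OF K.one_closed K.one_closed] by simp
      then show "{\<one>\<^bsub>K\<^esub>} \<subseteq> {x \<otimes>\<^bsub>K\<^esub> y \<otimes>\<^bsub>K\<^esub> inv\<^bsub>K\<^esub> x \<otimes>\<^bsub>K\<^esub> inv\<^bsub>K\<^esub> y | x y. x \<in> carrier K \<and> y \<in> carrier K}"
        using K.one_closed by blast
    qed
  qed
  have lc1: "lower_central K (Suc 0) = {\<one>\<^bsub>K\<^esub>}"
  proof -
    have "lower_central K (Suc 0) = generate K {x \<otimes>\<^bsub>K\<^esub> y \<otimes>\<^bsub>K\<^esub> inv\<^bsub>K\<^esub> x \<otimes>\<^bsub>K\<^esub> inv\<^bsub>K\<^esub> y | x y. x \<in> carrier K \<and> y \<in> carrier K}"
      by (simp only: lower_central.simps commutator_subgroup_def)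
    also have "\<dots> = generate K {\<one>\<^bsub>K\<^esub>}" by (simp only: comm1)
    also have "\<dots> = {\<one>\<^bsub>K\<^esub>}" by (rule group.generate_one[OF grpK])
    finally show ?thesis .
  qed
  have nilK: "nilpotent_group K"
    unfolding nilpotent_group_def using grpK lc1 by blast
  define U where "U = \<Union>{N. N \<lhd> G \<and> nilpotent_group (G\<lparr>carrier := N\<rparr>)}"
  define F where "F = fitting_subgroup G"
  have FU: "F = generate G U" unfolding F_def U_def fitting_subgroup_def by (rule refl)
  have "R \<lhd> G \<and> nilpotent_group (G\<lparr>carrier := R\<rparr>)" using nR nilK unfolding K_def by blast
  then have RU: "R \<subseteq> U" unfolding U_def by blast
  have RF: "R \<subseteq> F" unfolding FU
  proof
    fix x assume "x \<in> R"
    then have "x \<in> U" using RU by blast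
    then show "x \<in> generate G U" by (rule generate.incl)
  qed
  have UG: "U \<subseteq> carrier G"
  proof
    fix h assume "h \<in> U"
    then obtain N where N: "N \<lhd> G" "h \<in> N" by (auto simp: U_def)
    then show "h \<in> carrier G" using subgroup.subset[OF normal_imp_subgroup[OF N(1)]] by blast
  qed
  have nF: "F \<lhd> G" unfolding FU
  proof (rule group.normal_generateI[OF grpG UG])
    fix h g assume "h \<in> U" "g \<in> carrier G"
    then obtain N where N: "N \<lhd> G" "nilpotent_group (G\<lparr>carrier := N\<rparr>)" "h \<in> N" "g \<in> carrier G"
      by (auto simp: U_def)
    then have "g \<otimes>\<^bsub>G\<^esub> h \<otimes>\<^bsub>G\<^esub> inv\<^bsub>G\<^esub> g \<in> N" using normal.inv_op_closed2[OF N(1)] by blast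
    then show "g \<otimes>\<^bsub>G\<^esub> h \<otimes>\<^bsub>G\<^esub> inv\<^bsub>G\<^esub> g \<in> U"
      unfolding U_def using N by blast
  qed
  have subF: "subgroup F G" using normal_imp_subgroup[OF nF] .
  have grpF: "group (G\<lparr>carrier := F\<rparr>)" by (rule group.subgroup_imp_group[OF grpG subF])
  have subRF: "subgroup R (G\<lparr>carrier := F\<rparr>)" by (rule group.subgroup_incl[OF grpG subR subF RF])
  have l1: "card (rcosets\<^bsub>G\<lparr>carrier := F\<rparr>\<^esub> R) * card R = card F"
    using group.lagrange[OF grpF subRF] by (simp add: order_def)
  have l2: "card (rcosets\<^bsub>G\<^esub> R) * card R = card S"
    using group.lagrange[OF grpG subR] by (simp add: order_def cG)
  have l3: "card (rcosets\<^bsub>G\<^esub> F) * card F = card S"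
    using group.lagrange[OF grpG subF] by (simp add: order_def cG)
  have "finite R" using Rchar assms(2) by (meson finite_subset subsetI)
  moreover have "R \<noteq> {}" using subgroup.one_closed[OF subR] by blast
  ultimately have Rpos: "card R > 0" by (simp add: card_gt_0_iff)
  have "card (rcosets\<^bsub>G\<^esub> F) * card (rcosets\<^bsub>G\<lparr>carrier := F\<rparr>\<^esub> R) = card (rcosets\<^bsub>G\<^esub> R)"
  proof -
    have "(card (rcosets\<^bsub>G\<^esub> F) * card (rcosets\<^bsub>G\<lparr>carrier := F\<rparr>\<^esub> R)) * card R = card (rcosets\<^bsub>G\<^esub> R) * card R"
      using l1 l2 l3 by (simp add: mult.assoc)
    then show ?thesis using Rpos by simp
  qed
  then have "card (rcosets\<^bsub>G\<^esub> F) dvd 8" using m8 by (metis dvd_mult_left)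
  then obtain k where k: "card (rcosets\<^bsub>G\<^esub> F) = 2 ^ k" using dvd8_pow2 by blast
  have "order (G Mod F) = 2 ^ k" using k by (simp add: order_def FactGroup_def)
  then show ?thesis using nF assms(3) unfolding G_def[symmetric] F_def[symmetric]
    by blast
qed

end
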